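(* Let $D$ be a non-commutative division ring and $R$ a maximal subring of $D$. Then at least one of the following holds: (1) $N(R)=U(R)\cup\{0\}$; (2) $R$ is a division ring and $[D:R]_l=[D:R]_r$ is finite; (3) $R$ is not a division ring and there exists a nonzero non-unit $a\in R$ with $aR=Ra$ (so that, in particular, $R$ is an Ore $G$-domain whose division ring of quotients is $D$).
   Context: All rings are associative unital and subrings share the identity. A maximal subring of a ring $T$ is a proper subring maximal under inclusion among proper subrings of $T$. $N(R)=\{x\in D: xR=Rx\}$, $U(R)$ is the set of units of $R$. $[D:R]_l$, $[D:R]_r$ are the left and right dimensions of $D$ over a subdivision ring $R$. A $G$-domain is a domain in which the intersection of all nonzero prime ideals is nonzero. *)

theory Defs
  imports Main
begin

definition subring :: "'a::ring_1 set \<Rightarrow> bool" where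
  "subring R \<longleftrightarrow> 1 \<in> R \<and> (\<forall>x\<in>R. \<forall>y\<in>R. x + y \<in> R \<and> x - y \<in> R \<and> x * y \<in> R)"

definition maximal_subring :: "'a::ring_1 set \<Rightarrow> bool" where
  "maximal_subring R \<longleftrightarrow> subring R \<and> R \<noteq> UNIV \<and>
     (\<forall>S. subring S \<and> R \<subseteq> S \<and> S \<noteq> UNIV \<longrightarrow> S = R)"

definition units_of_sub :: "'a::ring_1 set \<Rightarrow> 'a set" where
  "units_of_sub R = {x \<in> R. \<exists>y\<in>R. x * y = 1 \<and> y * x = 1}"

definition normalizer_set :: "'a::ring_1 set \<Rightarrow> 'a set" where
  "normalizer_set R = {x. (\<lambda>r. x * r) ` R = (\<lambda>r. r * x) ` R}"

definition sub_division_ring :: "'a::division_ring set \<Rightarrow> bool" where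
  "sub_division_ring R \<longleftrightarrow> subring R \<and> (\<forall>x\<in>R. x \<noteq> 0 \<longrightarrow> inverse x \<in> R)"

definition left_basis :: "'a::ring_1 set \<Rightarrow> 'a set \<Rightarrow> bool" where
  "left_basis R B \<longleftrightarrow>
     (\<forall>F c. finite F \<and> F \<subseteq> B \<and> (\<forall>b\<in>F. c b \<in> R) \<and> (\<Sum>b\<in>F. c b * b) = 0
            \<longrightarrow> (\<forall>b\<in>F. c b = 0)) \<and>
     (\<forall>d. \<exists>F c. finite F \<and> F \<subseteq> B \<and> (\<forall>b\<in>F. c b \<in> R) \<and> d = (\<Sum>b\<in>F. c b * b))"

definition right_basis :: "'a::ring_1 set \<Rightarrow> 'a set \<Rightarrow> bool" where
  "right_basis R B \<longleftrightarrow>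
     (\<forall>F c. finite F \<and> F \<subseteq> B \<and> (\<forall>b\<in>F. c b \<in> R) \<and> (\<Sum>b\<in>F. b * c b) = 0
            \<longrightarrow> (\<forall>b\<in>F. c b = 0)) \<and>
     (\<forall>d. \<exists>F c. finite F \<and> F \<subseteq> B \<and> (\<forall>b\<in>F. c b \<in> R) \<and> d = (\<Sum>b\<in>F. b * c b))"

definition sub_ideal :: "'a::ring_1 set \<Rightarrow> 'a set \<Rightarrow> bool" where
  "sub_ideal R P \<longleftrightarrow> P \<subseteq> R \<and> 0 \<in> P \<and> (\<forall>x\<in>P. \<forall>y\<in>P. x + y \<in> P \<and> - x \<in> P) \<and>
     (\<forall>r\<in>R. \<forall>x\<in>P. r * x \<in> P \<and> x * r \<in> P)"

definition sub_prime_ideal :: "'a::ring_1 set \<Rightarrow> 'a set \<Rightarrow> bool" where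
  "sub_prime_ideal R P \<longleftrightarrow> sub_ideal R P \<and> P \<noteq> R \<and>
     (\<forall>a\<in>R. \<forall>b\<in>R. (\<forall>r\<in>R. a * r * b \<in> P) \<longrightarrow> a \<in> P \<or> b \<in> P)"

definition G_domain :: "'a::ring_1 set \<Rightarrow> bool" where
  "G_domain R \<longleftrightarrow> (\<exists>x\<in>R. x \<noteq> 0 \<and> (\<forall>P. sub_prime_ideal R P \<and> P \<noteq> {0} \<longrightarrow> x \<in> P))"

(* R (a subring of the division ring D, hence a domain) is a left and right Ore
   domain whose division ring of (left and right) quotients is D *)
definition Ore_with_quotient_ring :: "'a::division_ring set \<Rightarrow> bool" where
  "Ore_with_quotient_ring R \<longleftrightarrow>
     (\<forall>d. \<exists>a\<in>R. \<exists>b\<in>R. b \<noteq> 0 \<and> d = a * inverse b) \<and>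
     (\<forall>d. \<exists>a\<in>R. \<exists>b\<in>R. b \<noteq> 0 \<and> d = inverse b * a)"

end

theory Submission
  imports Defs
begin


inductive_set spanL :: "'a::ring_1 set \<Rightarrow> 'a \<Rightarrow> nat \<Rightarrow> 'a set" for A z m where
  L0: "0 \<in> spanL A z m"
| Lg: "d \<in> A \<Longrightarrow> j < m \<Longrightarrow> d * z ^ j \<in> spanL A z m"
| La: "s \<in> spanL A z m \<Longrightarrow> t \<in> spanL A z m \<Longrightarrow> s + t \<in> spanL A z m"

inductive_set spanR :: "'a::ring_1 set \<Rightarrow> 'a \<Rightarrow> nat \<Rightarrow> 'a set" for A z m where
  R0: "0 \<in> spanR A z m"
| Rg: "d \<in> A \<Longrightarrow> j < m \<Longrightarrow> z ^ j * d \<in> spanR A z m"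
| Ra: "s \<in> spanR A z m \<Longrightarrow> t \<in> spanR A z m \<Longrightarrow> s + t \<in> spanR A z m"

lemma spanL_0: "s \<in> spanL A z 0 \<Longrightarrow> s = 0"
  by (induction rule: spanL.induct) auto

lemma spanR_0: "s \<in> spanR A z 0 \<Longrightarrow> s = 0"
  by (induction rule: spanR.induct) auto

lemma spanL_mono: "s \<in> spanL A z m \<Longrightarrow> m \<le> k \<Longrightarrow> s \<in> spanL A z k"
  by (induction rule: spanL.induct) (auto intro: spanL.intros)

lemma spanR_mono: "s \<in> spanR A z m \<Longrightarrow> m \<le> k \<Longrightarrow> s \<in> spanR A z k"
  by (induction rule: spanR.induct) (auto intro: spanR.intros)

lemma spanL_top:
  assumes "s \<in> spanL A z (Suc m)" "0 \<in> A" "\<forall>a\<in>A. \<forall>b\<in>A. a + b \<in> A"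
  shows "\<exists>t\<in>spanL A z m. \<exists>d\<in>A. s = t + d * z ^ m"
  using assms
proof (induction rule: spanL.induct)
  case L0 then show ?case using spanL.L0[of A z m] by force
next
  case (Lg d j)
  show ?case
  proof (cases "j < m")
    case True
    have "d * z ^ j \<in> spanL A z m" using Lg True by (intro spanL.Lg)
    moreover have "d * z ^ j = d * z ^ j + 0 * z ^ m" by simp
    ultimately show ?thesis using Lg by blast
  next
    case False then have "j = m" using Lg by simp
    moreover have "d * z ^ j = 0 + d * z ^ j" by simp
    ultimately show ?thesis using Lg spanL.L0[of A z m] by blast
  qed
next
  case (La s t)
  then obtain t1 d1 t2 d2 where "t1 \<in> spanL A z m" "d1 \<in> A" "s = t1 + d1 * z ^ m"
    "t2 \<in> spanL A z m" "d2 \<in> A" "t = t2 + d2 * z ^ m" by blast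
  moreover have "t1 + t2 \<in> spanL A z m" using calculation by (intro spanL.La)
  moreover have "d1 + d2 \<in> A" using calculation La.prems by blast
  moreover have "s + t = (t1 + t2) + (d1 + d2) * z ^ m" using calculation by (simp add: algebra_simps)
  ultimately show ?case by blast
qed

lemma spanR_top:
  assumes "s \<in> spanR A z (Suc m)" "0 \<in> A" "\<forall>a\<in>A. \<forall>b\<in>A. a + b \<in> A"
  shows "\<exists>t\<in>spanR A z m. \<exists>d\<in>A. s = t + z ^ m * d"
  using assms
proof (induction rule: spanR.induct)
  case R0 then show ?case using spanR.R0[of A z m] by force
next
  case (Rg d j)
  show ?case
  proof (cases "j < m")
    case True
    have "z ^ j * d \<in> spanR A z m" using Rg True by (intro spanR.Rg)
    moreover have "z ^ j * d = z ^ j * d + z ^ m * 0" by simp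
    ultimately show ?thesis using Rg by blast
  next
    case False then have "j = m" using Rg by simp
    moreover have "z ^ j * d = 0 + z ^ j * d" by simp
    ultimately show ?thesis using Rg spanR.R0[of A z m] by blast
  qed
next
  case (Ra s t)
  then obtain t1 d1 t2 d2 where "t1 \<in> spanR A z m" "d1 \<in> A" "s = t1 + z ^ m * d1"
    "t2 \<in> spanR A z m" "d2 \<in> A" "t = t2 + z ^ m * d2" by blast
  moreover have "t1 + t2 \<in> spanR A z m" using calculation by (intro spanR.Ra)
  moreover have "d1 + d2 \<in> A" using calculation Ra.prems by blast
  moreover have "s + t = (t1 + t2) + z ^ m * (d1 + d2)" using calculation by (simp add: algebra_simps)
  ultimately show ?case by blast
qed

lemma spanL_const:
  assumes "s \<in> spanL A z (Suc m)" "0 \<in> A" "\<forall>a\<in>A. \<forall>b\<in>A. a + b \<in> A"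
  shows "\<exists>d\<in>A. \<exists>t\<in>spanL A z m. s = d + t * z"
  using assms
proof (induction rule: spanL.induct)
  case L0 then show ?case using spanL.L0[of A z m] by force
next
  case (Lg d j)
  show ?case
  proof (cases j)
    case 0
    have "d * z ^ j = d + 0 * z" using 0 by simp
    then show ?thesis using Lg spanL.L0[of A z m] by blast
  next
    case (Suc i)
    then have "d * z ^ j = 0 + (d * z ^ i) * z" by (simp only: power_Suc2 mult.assoc add_0)
    moreover have "d * z ^ i \<in> spanL A z m" using Lg Suc by (intro spanL.Lg) auto
    ultimately show ?thesis using Lg by blast
  qed
next
  case (La s t)
  then obtain t1 d1 t2 d2 where "t1 \<in> spanL A z m" "d1 \<in> A" "s = d1 + t1 * z"
    "t2 \<in> spanL A z m" "d2 \<in> A" "t = d2 + t2 * z" by blast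
  moreover have "t1 + t2 \<in> spanL A z m" using calculation by (intro spanL.La)
  moreover have "d1 + d2 \<in> A" using calculation La.prems by blast
  moreover have "s + t = (d1 + d2) + (t1 + t2) * z" using calculation by (simp add: algebra_simps)
  ultimately show ?case by blast
qed

lemma spanR_const:
  assumes "s \<in> spanR A z (Suc m)" "0 \<in> A" "\<forall>a\<in>A. \<forall>b\<in>A. a + b \<in> A"
  shows "\<exists>d\<in>A. \<exists>t\<in>spanR A z m. s = d + z * t"
  using assms
proof (induction rule: spanR.induct)
  case R0 then show ?case using spanR.R0[of A z m] by force
next
  case (Rg d j)
  show ?case
  proof (cases j)
    case 0
    have "z ^ j * d = d + z * 0" using 0 by simp
    then show ?thesis using Rg spanR.R0[of A z m] by blast
  next
    case (Suc i)
    then have "z ^ j * d = 0 + z * (z ^ i * d)" by (simp add: mult.assoc)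
    moreover have "z ^ i * d \<in> spanR A z m" using Rg Suc by (intro spanR.Rg) auto
    ultimately show ?thesis using Rg by blast
  qed
next
  case (Ra s t)
  then obtain t1 d1 t2 d2 where "t1 \<in> spanR A z m" "d1 \<in> A" "s = d1 + z * t1"
    "t2 \<in> spanR A z m" "d2 \<in> A" "t = d2 + z * t2" by blast
  moreover have "t1 + t2 \<in> spanR A z m" using calculation by (intro spanR.Ra)
  moreover have "d1 + d2 \<in> A" using calculation Ra.prems by blast
  moreover have "s + t = (d1 + d2) + z * (t1 + t2)" using calculation by (simp add: algebra_simps)
  ultimately show ?case by blast
qed

lemma spanL_lmult: "s \<in> spanL A z m \<Longrightarrow> \<forall>a\<in>A. r * a \<in> B \<Longrightarrow> r * s \<in> spanL B z m"
  by (induction rule: spanL.induct) (auto intro: spanL.intros simp: distrib_left mult.assoc[symmetric])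

lemma spanR_rmult: "s \<in> spanR A z m \<Longrightarrow> \<forall>a\<in>A. a * r \<in> B \<Longrightarrow> s * r \<in> spanR B z m"
  by (induction rule: spanR.induct) (auto intro: spanR.intros simp: distrib_right mult.assoc)

lemma spanL_zmult: "s \<in> spanL A z m \<Longrightarrow> s * z \<in> spanL A z (Suc m)"
proof (induction rule: spanL.induct)
  case (Lg d j)
  have "d * z ^ j * z = d * z ^ Suc j" by (simp only: power_Suc2 mult.assoc)
  moreover have "d * z ^ Suc j \<in> spanL A z (Suc m)" using Lg by (intro spanL.Lg) auto
  ultimately show ?case by simp
qed (auto intro: spanL.intros simp: distrib_right)

lemma spanL_zpow: "s \<in> spanL A z m \<Longrightarrow> s * z ^ j \<in> spanL A z (m + j)"
proof (induction j)
  case 0 then show ?case by simp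
next
  case (Suc j)
  then have "s * z ^ j * z \<in> spanL A z (Suc (m + j))" by (intro spanL_zmult) 
  moreover have "s * z ^ j * z = s * z ^ Suc j" by (simp only: power_Suc2 mult.assoc)
  ultimately show ?case by simp
qed

lemma spanL_neg: "s \<in> spanL A z m \<Longrightarrow> \<forall>a\<in>A. -a \<in> A \<Longrightarrow> -s \<in> spanL A z m"
proof (induction rule: spanL.induct)
  case (Lg d j)
  have "- (d * z ^ j) = (- d) * z ^ j" by simp
  then show ?case using Lg by (metis spanL.Lg)
next
  case (La s t)
  then show ?case by (metis minus_add_distrib spanL.La)
qed (auto intro: spanL.intros)

lemma spanL_sum: "(\<forall>j. c j \<in> A) \<Longrightarrow> (\<Sum>j<m. c j * z ^ j) \<in> spanL A z m"
proof (induction m)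
  case 0 then show ?case by (simp add: spanL.L0)
next
  case (Suc m)
  then show ?case by (auto intro!: spanL.La spanL.Lg elim: spanL_mono)
qed

lemma spanL_explicit:
  assumes "s \<in> spanL A z m" "0 \<in> A" "\<forall>a\<in>A. \<forall>b\<in>A. a + b \<in> A"
  shows "\<exists>c. (\<forall>j. c j \<in> A) \<and> s = (\<Sum>j<m. c j * z ^ j)"
  using assms
proof (induction rule: spanL.induct)
  case L0 then show ?case by (auto intro!: exI[of _ "\<lambda>j. 0"])
next
  case (Lg d j)
  show ?case
  proof (rule exI[of _ "\<lambda>k. if k = j then d else 0"], intro conjI)
    have "(\<Sum>k<m. (if k = j then d else 0) * z ^ k) = (\<Sum>k<m. if k = j then d * z^j else 0)"
      by (rule sum.cong) auto
    also have "\<dots> = d * z ^ j" using Lg by simp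
    finally show "d * z ^ j = (\<Sum>k<m. (if k = j then d else 0) * z ^ k)" by simp
  qed (use Lg in auto)
next
  case (La s t)
  then obtain c1 c2 where "\<forall>j. c1 j \<in> A" "s = (\<Sum>j<m. c1 j * z ^ j)"
     "\<forall>j. c2 j \<in> A" "t = (\<Sum>j<m. c2 j * z ^ j)" by blast
  then show ?case using La.prems
    by (auto intro!: exI[of _ "\<lambda>j. c1 j + c2 j"] simp: distrib_right sum.distrib)
qed




lemma pw1: "(x::'a::division_ring) \<noteq> 0 \<Longrightarrow> j \<le> k \<Longrightarrow> x ^ k * inverse x ^ j = x ^ (k - j)"
proof -
  assume x: "x \<noteq> 0" and jk: "j \<le> k"
  have "x ^ k = x ^ (k - j) * x ^ j" using jk by (simp add: power_add[symmetric])
  then have "x ^ k * inverse x ^ j = x ^ (k - j) * (x ^ j * inverse (x ^ j))"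
    by (simp add: power_inverse mult.assoc)
  also have "\<dots> = x ^ (k - j)" using x by simp
  finally show ?thesis .
qed

lemma pw2: "(x::'a::division_ring) \<noteq> 0 \<Longrightarrow> j \<le> k \<Longrightarrow> x ^ j * inverse x ^ k = inverse x ^ (k - j)"
proof -
  assume x: "x \<noteq> 0" and jk: "j \<le> k"
  have "inverse x ^ k = inverse x ^ j * inverse x ^ (k - j)" using jk by (simp add: power_add[symmetric])
  then have "x ^ j * inverse x ^ k = (x ^ j * inverse (x ^ j)) * inverse x ^ (k - j)"
    by (simp add: power_inverse mult.assoc)
  also have "\<dots> = inverse x ^ (k - j)" using x by simp
  finally show ?thesis .
qed

locale msr =
  fixes R :: "'a::division_ring set"
  assumes max: "maximal_subring R"
begin

lemma subR: "subring R" using max maximal_subring_def by blast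
lemma R1: "1 \<in> R" using subR subring_def by blast
lemma Radd: "a \<in> R \<Longrightarrow> b \<in> R \<Longrightarrow> a + b \<in> R" using subR subring_def by blast
lemma Rdiff: "a \<in> R \<Longrightarrow> b \<in> R \<Longrightarrow> a - b \<in> R" using subR subring_def by blast
lemma Rmul: "a \<in> R \<Longrightarrow> b \<in> R \<Longrightarrow> a * b \<in> R" using subR subring_def by blast
lemma R0: "0 \<in> R" using Rdiff[OF R1 R1] by simp
lemma Rneg: "a \<in> R \<Longrightarrow> - a \<in> R" using Rdiff[OF R0, of a] by simp
lemma Rpow: "a \<in> R \<Longrightarrow> a ^ n \<in> R" by (induction n) (auto simp: R1 Rmul)

definition nrm :: "'a \<Rightarrow> bool" where
  "nrm z \<longleftrightarrow> (\<forall>r\<in>R. \<exists>s\<in>R. z * r = s * z) \<and> (\<forall>r\<in>R. \<exists>s\<in>R. r * z = z * s)"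

lemma nrm_iff: "x \<in> normalizer_set R \<longleftrightarrow> nrm x"
proof
  assume "x \<in> normalizer_set R"
  then have e: "(\<lambda>r. x * r) ` R = (\<lambda>r. r * x) ` R" by (simp add: normalizer_set_def)
  have "\<forall>r\<in>R. \<exists>s\<in>R. x * r = s * x"
  proof
    fix r assume "r \<in> R"
    then have "x * r \<in> (\<lambda>r. r * x) ` R" using e by blast
    then show "\<exists>s\<in>R. x * r = s * x" by blast
  qed
  moreover have "\<forall>r\<in>R. \<exists>s\<in>R. r * x = x * s"
  proof
    fix r assume "r \<in> R"
    then have "r * x \<in> (\<lambda>r. x * r) ` R" using e by blast
    then show "\<exists>s\<in>R. r * x = x * s" by blast
  qed
  ultimately show "nrm x" by (simp add: nrm_def)
next
  assume "nrm x"
  then have a: "\<forall>r\<in>R. \<exists>s\<in>R. x * r = s * x" and b: "\<forall>r\<in>R. \<exists>s\<in>R. r * x = x * s"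
    by (auto simp: nrm_def)
  have "(\<lambda>r. x * r) ` R = (\<lambda>r. r * x) ` R"
  proof
    show "(\<lambda>r. x * r) ` R \<subseteq> (\<lambda>r. r * x) ` R" using a by fastforce
    show "(\<lambda>r. r * x) ` R \<subseteq> (\<lambda>r. x * r) ` R" using b by fastforce
  qed
  then show "x \<in> normalizer_set R" by (simp add: normalizer_set_def)
qed

lemma nrm_mult: "nrm a \<Longrightarrow> nrm b \<Longrightarrow> nrm (a * b)"
proof -
  assume a: "nrm a" and b: "nrm b"
  have "\<exists>s\<in>R. a * b * r = s * (a * b)" if r: "r \<in> R" for r
  proof -
    obtain s1 where s1: "s1 \<in> R" "b * r = s1 * b" using b r by (auto simp: nrm_def)
    obtain s2 where s2: "s2 \<in> R" "a * s1 = s2 * a" using a s1 by (auto simp: nrm_def)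
    have "a * b * r = s2 * (a * b)" by (simp add: mult.assoc s1(2)) (simp add: mult.assoc[symmetric] s2(2))
    then show ?thesis using s2 by blast
  qed
  moreover have "\<exists>s\<in>R. r * (a * b) = (a * b) * s" if r: "r \<in> R" for r
  proof -
    obtain s1 where s1: "s1 \<in> R" "r * a = a * s1" using a r by (auto simp: nrm_def)
    obtain s2 where s2: "s2 \<in> R" "s1 * b = b * s2" using b s1 by (auto simp: nrm_def)
    have "r * (a * b) = (a * b) * s2" by (simp add: mult.assoc[symmetric] s1(2)) (simp add: mult.assoc s2(2))
    then show ?thesis using s2 by blast
  qed
  ultimately show ?thesis by (simp add: nrm_def)
qed

lemma nrm_1: "nrm 1" by (auto simp: nrm_def)

lemma nrm_pow: "nrm z \<Longrightarrow> nrm (z ^ k)"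
  by (induction k) (auto simp: nrm_1 nrm_mult)

lemma nrm_inv: assumes "nrm z" shows "nrm (inverse z)"
proof (cases "z = 0")
  case True then show ?thesis using assms by simp
next
  case False
  have "\<exists>s\<in>R. inverse z * r = s * inverse z" if r: "r \<in> R" for r
  proof -
    obtain s where s: "s \<in> R" "r * z = z * s" using assms r by (auto simp: nrm_def)
    have "inverse z * r = inverse z * (r * z) * inverse z" using False by (simp add: mult.assoc)
    also have "\<dots> = s * inverse z" using False by (simp add: s(2) mult.assoc[symmetric])
    finally show ?thesis using s by blast
  qed
  moreover have "\<exists>s\<in>R. r * inverse z = inverse z * s" if r: "r \<in> R" for r
  proof -
    obtain s where s: "s \<in> R" "z * r = s * z" using assms r by (auto simp: nrm_def)
    have "r * inverse z = inverse z * (z * r) * inverse z" using False by (simp add: mult.assoc[symmetric])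
    also have "\<dots> = inverse z * s" using False by (simp add: s(2) mult.assoc)
    finally show ?thesis using s by blast
  qed
  ultimately show ?thesis by (simp add: nrm_def)
qed

lemma nrmD1: "nrm z \<Longrightarrow> r \<in> R \<Longrightarrow> \<exists>s\<in>R. z ^ k * r = s * z ^ k"
  using nrm_pow[of z k] by (auto simp: nrm_def)

lemma nrmD2: "nrm z \<Longrightarrow> r \<in> R \<Longrightarrow> \<exists>s\<in>R. r * z ^ k = z ^ k * s"
  using nrm_pow[of z k] by (auto simp: nrm_def)

lemma spanL_rmultR:
  "s \<in> spanL A z m \<Longrightarrow> nrm z \<Longrightarrow> r \<in> R \<Longrightarrow> \<forall>a\<in>A. \<forall>r\<in>R. a * r \<in> B \<Longrightarrow> s * r \<in> spanL B z m"
proof (induction rule: spanL.induct)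
  case (Lg d j)
  obtain s where s: "s \<in> R" "z ^ j * r = s * z ^ j" using nrmD1 Lg by blast
  have "d * z ^ j * r = (d * s) * z ^ j" by (simp add: mult.assoc s(2))
  moreover have "d * s \<in> B" using Lg s by blast
  ultimately show ?case using Lg by (metis spanL.Lg)
qed (auto intro: spanL.intros simp: distrib_right)

lemma spanR_lmultR:
  "s \<in> spanR A z m \<Longrightarrow> nrm z \<Longrightarrow> r \<in> R \<Longrightarrow> \<forall>a\<in>A. \<forall>r\<in>R. r * a \<in> B \<Longrightarrow> r * s \<in> spanR B z m"
proof (induction rule: spanR.induct)
  case (Rg d j)
  obtain s where s: "s \<in> R" "r * z ^ j = z ^ j * s" using nrmD2 Rg by blast
  have "r * (z ^ j * d) = z ^ j * (s * d)" by (simp add: mult.assoc[symmetric] s(2))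
  moreover have "s * d \<in> B" using Rg s by blast
  ultimately show ?case using Rg by (metis spanR.Rg)
qed (auto intro: spanR.intros simp: distrib_left)

lemma spanL_toR: "s \<in> spanL R z m \<Longrightarrow> nrm z \<Longrightarrow> s \<in> spanR R z m"
proof (induction rule: spanL.induct)
  case (Lg d j)
  obtain s where s: "s \<in> R" "d * z ^ j = z ^ j * s" using nrmD2 Lg by blast
  then show ?case using Lg by (metis spanR.Rg)
qed (auto intro: spanR.intros)

lemma spanL_mult: "t \<in> spanL R z k \<Longrightarrow> s \<in> spanL R z m \<Longrightarrow> nrm z \<Longrightarrow> s * t \<in> spanL R z (m + k)"
proof (induction rule: spanL.induct)
  case L0 then show ?case by (simp add: spanL.L0)
next
  case (Lg d j)
  have "s * d \<in> spanL R z m" using spanL_rmultR[OF Lg(3) Lg(4) Lg(1)] Rmul by blast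
  then have "s * d * z ^ j \<in> spanL R z (m + j)" by (rule spanL_zpow)
  then have "s * d * z ^ j \<in> spanL R z (m + k)" using Lg(2) by (auto elim: spanL_mono)
  then show ?case by (simp add: mult.assoc)
next
  case (La t1 t2)
  then show ?case by (simp add: distrib_left spanL.La)
qed

lemma gen: assumes "nrm z" "z \<notin> R" shows "\<exists>m. d \<in> spanL R z m"
proof -
  let ?S = "{s. \<exists>m. s \<in> spanL R z m}"
  have one: "1 \<in> spanL R z 1" using spanL.Lg[of 1 R 0 1 z] R1 by simp
  have inS: "r \<in> ?S" if "r \<in> R" for r
    using spanL.Lg[of r R 0 1 z] that by auto
  have zS: "z \<in> ?S" using spanL.Lg[of 1 R 1 2 z] R1 by auto
  have "subring ?S"
    unfolding subring_def
  proof (intro conjI ballI)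
    show "1 \<in> ?S" using one by blast
  next
    fix x y assume "x \<in> ?S" "y \<in> ?S"
    then obtain m k where m: "x \<in> spanL R z m" and k: "y \<in> spanL R z k" by blast
    have m': "x \<in> spanL R z (m + k)" and k': "y \<in> spanL R z (m + k)"
      using m k by (auto elim: spanL_mono)
    show "x + y \<in> ?S" using spanL.La[OF m' k'] by blast
    have "- y \<in> spanL R z (m + k)" using spanL_neg[OF k'] Rneg by blast
    then show "x - y \<in> ?S" using spanL.La[OF m'] by (metis (mono_tags) mem_Collect_eq diff_conv_add_uminus)
    show "x * y \<in> ?S" using spanL_mult[OF k m assms(1)] by blast
  qed
  moreover have "R \<subseteq> ?S" using inS by blast
  moreover have "?S \<noteq> R" using zS assms(2) by blast
  ultimately have "?S = UNIV" using max unfolding maximal_subring_def by blast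
  then show ?thesis by blast
qed

end



context msr begin

lemma mix1:
  assumes "w \<in> spanR A' (inverse x) B" "B \<le> Suc K" "x \<noteq> 0" "nrm x" "A' \<subseteq> R"
    "\<forall>r\<in>R. a' * r \<in> I"
  shows "a' * x ^ K * w \<in> spanL I x (Suc K)"
  using assms
proof (induction rule: spanR.induct)
  case R0 then show ?case by (simp add: spanL.L0)
next
  case (Rg d j)
  have "x ^ K * inverse x ^ j = x ^ (K - j)" using Rg by (intro pw1) auto
  moreover obtain s where s: "s \<in> R" "x ^ (K - j) * d = s * x ^ (K - j)" using nrmD1 Rg by blast
  ultimately have "a' * x ^ K * (inverse x ^ j * d) = (a' * s) * x ^ (K - j)"
    by (metis mult.assoc)
  moreover have "a' * s \<in> I" using s Rg by blast
  ultimately show ?case by (metis spanL.Lg less_Suc_eq_le diff_le_self)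
next
  case (Ra s t) then show ?case by (simp add: distrib_left spanL.La)
qed

lemma mix2:
  assumes "w \<in> spanL A' x A" "A \<le> Suc K" "x \<noteq> 0" "nrm (inverse x)" "A' \<subseteq> R"
    "d \<in> I" "\<forall>r\<in>R. r * d \<in> I"
  shows "w * inverse x ^ K * d \<in> spanR I (inverse x) (Suc K)"
  using assms
proof (induction rule: spanL.induct)
  case L0 then show ?case by (simp add: spanR.R0)
next
  case (Lg e j)
  have "x ^ j * inverse x ^ K = inverse x ^ (K - j)" using Lg by (intro pw2) auto
  moreover obtain s where s: "s \<in> R" "e * inverse x ^ (K - j) = inverse x ^ (K - j) * s"
    using nrmD2 Lg by blast
  ultimately have "e * x ^ j * inverse x ^ K * d = inverse x ^ (K - j) * (s * d)"
    by (metis mult.assoc)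
  moreover have "s * d \<in> I" using s Lg by blast
  ultimately show ?case by (metis spanR.Rg less_Suc_eq_le diff_le_self)
next
  case (La s t) then show ?case by (simp add: distrib_right spanR.Ra)
qed

lemma simple:
  assumes nx: "nrm x" and xR: "x \<notin> R" and yR: "inverse x \<notin> R"
    and I: "I \<subseteq> R" "0 \<in> I" "\<forall>a\<in>I. \<forall>b\<in>I. a + b \<in> I" "\<forall>r\<in>R. \<forall>a\<in>I. r * a \<in> I"
       "\<forall>a\<in>I. \<forall>r\<in>R. a * r \<in> I"
    and a: "a \<in> I" "a \<noteq> 0"
  shows "1 \<in> I"
proof (rule ccontr)
  assume n1: "1 \<notin> I"
  define y where "y = inverse x"
  have x0: "x \<noteq> 0" using xR R0 by auto
  have ny: "nrm y" using nrm_inv[OF nx] y_def by simp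
  have yR': "y \<notin> R" using yR y_def by simp
  have step1: "1 \<in> spanL I x A"
    if h1: "1 \<in> spanL I x (Suc A)" and h2: "1 \<in> spanR I y (Suc B)" and A1: "1 \<le> A" and BA: "B \<le> A"
    for A B
  proof -
    obtain t a' where t: "t \<in> spanL I x A" "a' \<in> I" "1 = t + a' * x ^ A"
      using spanL_top[OF h1 I(2) I(3)] by blast
    obtain c w where c: "c \<in> I" "w \<in> spanR I y B" "1 = c + y * w"
      using spanR_const[OF h2 I(2) I(3)] by blast
    have "x ^ A * y ^ 1 = x ^ (A - 1)" unfolding y_def using x0 A1 by (intro pw1) auto
    then have key: "x ^ A * (1 - c) = x ^ (A - 1) * w"
      using c(3) by (metis add_diff_cancel_left' mult.assoc power_one_right)
    have "t * (1 - c) + a' * x ^ (A - 1) * w = (t + a' * x ^ A) * (1 - c)"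
      using key by (simp add: distrib_right mult.assoc)
    also have "\<dots> = 1 - c" using t(3) by simp
    finally have eq: "1 = c + (t * (1 - c) + a' * x ^ (A - 1) * w)" by (simp add: algebra_simps)
    have cR: "c \<in> R" using c I by blast
    have m1: "c \<in> spanL I x A" using spanL.Lg[of c I 0 A x] c A1 by simp
    have m2: "t * (1 - c) \<in> spanL I x A"
      using spanL_rmultR[OF t(1) nx] Rdiff[OF R1 cR] I(5) by blast
    have m3: "a' * x ^ (A - 1) * w \<in> spanL I x A"
      using mix1[where w=w and A'=I and B=B and K="A - 1" and x=x and a'=a' and I=I] c(2) y_def BA x0 nx I t(2) A1 by auto
    show ?thesis using eq m1 m2 m3 by (metis spanL.La)
  qed
  have step2: "1 \<in> spanR I y B"
    if h1: "1 \<in> spanL I x (Suc A)" and h2: "1 \<in> spanR I y (Suc B)" and B1: "1 \<le> B" and AB: "A \<le> B"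
    for A B
  proof -
    obtain c w where c: "c \<in> I" "w \<in> spanL I x A" "1 = c + w * x"
      using spanL_const[OF h1 I(2) I(3)] by blast
    obtain u d where u: "u \<in> spanR I y B" "d \<in> I" "1 = u + y ^ B * d"
      using spanR_top[OF h2 I(2) I(3)] by blast
    have "x ^ 1 * y ^ B = y ^ (B - 1)" unfolding y_def using x0 B1 by (intro pw2) auto
    then have key: "(1 - c) * y ^ B = w * y ^ (B - 1)"
      using c(3) by (metis add_diff_cancel_left' mult.assoc power_one_right)
    have "(1 - c) * u + w * y ^ (B - 1) * d = (1 - c) * (u + y ^ B * d)"
      using key by (simp add: distrib_left mult.assoc[symmetric])
    also have "\<dots> = 1 - c" using u(3) by simp
    finally have eq: "1 = c + ((1 - c) * u + w * y ^ (B - 1) * d)" by (simp add: algebra_simps)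
    have cR: "c \<in> R" using c I by blast
    have m1: "c \<in> spanR I y B" using spanR.Rg[of c I 0 B y] c B1 by simp
    have m2: "(1 - c) * u \<in> spanR I y B"
      using spanR_lmultR[OF u(1) ny] Rdiff[OF R1 cR] I(4) by blast
    have m3: "w * y ^ (B - 1) * d \<in> spanR I y B"
      using mix2[where w=w and A'=I and A=A and K="B - 1" and x=x and d=d and I=I] c(2) y_def AB x0 ny I u(2) B1 by auto
    show ?thesis using eq m1 m2 m3 by (metis spanR.Ra)
  qed
  have desc: "\<forall>m n. m + n = N \<longrightarrow> 1 \<in> spanL I x m \<longrightarrow> 1 \<in> spanR I y n \<longrightarrow> False" for N
  proof (induction N rule: less_induct)
    case (less N)
    show ?case
    proof (intro allI impI)
      fix m n assume mn: "m + n = N" and hx: "1 \<in> spanL I x m" and hy: "1 \<in> spanR I y n"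
      show False
      proof (cases m)
        case 0 then show False using hx spanL_0 by fastforce
      next
        case (Suc A)
        show False
        proof (cases n)
          case 0 then show False using hy spanR_0 by fastforce
        next
          case (Suc B)
          note hx' = hx[unfolded \<open>m = Suc A\<close>] and hy' = hy[unfolded \<open>n = Suc B\<close>]
          show False
          proof (cases "A = 0")
            case True
            obtain t a' where "t \<in> spanL I x A" "a' \<in> I" "1 = t + a' * x ^ A"
              using spanL_top[OF hx' I(2) I(3)] by blast
            then show False using True spanL_0 n1 by fastforce
          next
            case A0: False
            show False
            proof (cases "B = 0")
              case True
              obtain t d where "t \<in> spanR I y B" "d \<in> I" "1 = t + y ^ B * d"
                using spanR_top[OF hy' I(2) I(3)] by blast
              then show False using True spanR_0 n1 by fastforce
            next
              case B0: False
              show False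
              proof (cases "B \<le> A")
                case True
                have "1 \<in> spanL I x A" using step1[OF hx' hy'] True A0 by simp
                then show False using less.IH[of "A + n"] mn hy \<open>m = Suc A\<close> by auto
              next
                case False
                have "1 \<in> spanR I y B" using step2[OF hx' hy'] False B0 by simp
                then show False using less.IH[of "m + B"] mn hx \<open>n = Suc B\<close> by auto
              qed
            qed
          qed
        qed
      qed
    qed
  qed
  have aR: "a \<in> R" using a I by blast
  obtain m where m: "inverse a \<in> spanL R x m" using gen[OF nx xR] by blast
  have "a * inverse a \<in> spanL I x m" using spanL_lmult[OF m] I(5) a by blast
  then have hx: "1 \<in> spanL I x m" using a by simp
  obtain n where n: "inverse a \<in> spanL R y n" using gen[OF ny yR'] by blast
  have "inverse a \<in> spanR R y n" using spanL_toR[OF n ny] .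
  then have "inverse a * a \<in> spanR I y n" using spanR_rmult I(4) a by blast
  then have hy: "1 \<in> spanR I y n" using a by simp
  show False using desc[of "m + n"] hx hy by blast
qed

end



lemma pw3: "(x::'a::division_ring) \<noteq> 0 \<Longrightarrow> j \<le> k \<Longrightarrow> inverse x ^ j * x ^ k = x ^ (k - j)"
  using pw2[of "inverse x" j k] by simp

lemma pw4: "(x::'a::division_ring) \<noteq> 0 \<Longrightarrow> j \<le> k \<Longrightarrow> inverse x ^ k * x ^ j = inverse x ^ (k - j)"
  using pw1[of "inverse x" j k] by simp

context msr begin

lemma zero_in_R: "0 \<in> R" by (rule R0)

lemma form1:
  assumes "s \<in> spanL A' (inverse a) m" "A' \<subseteq> R" "a \<in> R" "a \<noteq> 0"
  shows "\<exists>p\<in>R. s = p * inverse a ^ m"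
  using assms
proof (induction rule: spanL.induct)
  case L0 then show ?case using zero_in_R by auto
next
  case (Lg d j)
  have "a ^ (m - j) * inverse a ^ m = inverse a ^ (m - (m - j))" using Lg by (intro pw2) auto
  then have "d * inverse a ^ j = (d * a ^ (m - j)) * inverse a ^ m" using Lg by (simp add: mult.assoc)
  moreover have "d * a ^ (m - j) \<in> R" using Lg by (auto intro: Rmul Rpow)
  ultimately show ?case by blast
next
  case (La s t)
  then obtain p q where "p \<in> R" "s = p * inverse a ^ m" "q \<in> R" "t = q * inverse a ^ m" by blast
  then show ?case by (metis Radd distrib_right)
qed

lemma form2:
  assumes "s \<in> spanR A' (inverse a) m" "A' \<subseteq> R" "a \<in> R" "a \<noteq> 0"
  shows "\<exists>p\<in>R. s = inverse a ^ m * p"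
  using assms
proof (induction rule: spanR.induct)
  case R0 then show ?case using zero_in_R by auto
next
  case (Rg d j)
  have "inverse a ^ m * a ^ (m - j) = inverse a ^ (m - (m - j))" using Rg by (intro pw4) auto
  then have "inverse a ^ j * d = inverse a ^ m * (a ^ (m - j) * d)" using Rg by (simp add: mult.assoc[symmetric])
  moreover have "a ^ (m - j) * d \<in> R" using Rg by (auto intro: Rmul Rpow)
  ultimately show ?case by blast
next
  case (Ra s t)
  then obtain p q where "p \<in> R" "s = inverse a ^ m * p" "q \<in> R" "t = inverse a ^ m * q" by blast
  then show ?case by (metis Radd distrib_left)
qed

lemma powP:
  assumes P: "sub_prime_ideal R P" and a: "a \<in> R" "nrm a"
  shows "a ^ n \<in> P \<Longrightarrow> a \<in> P"
proof (induction n)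
  case 0
  have "\<forall>r\<in>R. \<forall>x\<in>P. r * x \<in> P \<and> x * r \<in> P" using P by (simp add: sub_prime_ideal_def sub_ideal_def)
  then show ?case using 0 a(1) by (metis mult_1_left power_0)
next
  case (Suc n)
  have "\<forall>r\<in>R. a * r * a ^ n \<in> P"
  proof
    fix r assume r: "r \<in> R"
    obtain s where s: "s \<in> R" "r * a ^ n = a ^ n * s" using nrmD2[OF a(2) r] by blast
    have "a * r * a ^ n = a ^ Suc n * s" by (simp add: mult.assoc s(2))
    then show "a * r * a ^ n \<in> P" using Suc.prems s P unfolding sub_prime_ideal_def sub_ideal_def by auto
  qed
  then have "a \<in> P \<or> a ^ n \<in> P" using P a Rpow unfolding sub_prime_ideal_def by blast
  then show ?case using Suc.IH by blast
qed

lemma case3: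
  assumes a: "a \<in> R" "a \<noteq> 0" "a \<notin> units_of_sub R" "nrm a"
  shows "\<not> sub_division_ring R \<and>
        (\<exists>a\<in>R. a \<noteq> 0 \<and> a \<notin> units_of_sub R \<and> (\<lambda>r. a * r) ` R = (\<lambda>r. r * a) ` R) \<and>
        G_domain R \<and> Ore_with_quotient_ring R"
proof -
  define y where "y = inverse a"
  have yR: "y \<notin> R"
  proof
    assume "y \<in> R"
    then have "a \<in> units_of_sub R" using a unfolding units_of_sub_def y_def by auto
    then show False using a by simp
  qed
  have ny: "nrm y" using nrm_inv[OF a(4)] y_def by simp
  have f1: "\<exists>p\<in>R. \<exists>N. d = p * inverse (a ^ N)" for d
  proof -
    obtain m where "d \<in> spanL R y m" using gen[OF ny yR] by blast
    then obtain p where "p \<in> R" "d = p * inverse a ^ m" using form1[of d R a m] a y_def by auto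
    then show ?thesis by (metis power_inverse)
  qed
  have f2: "\<exists>p\<in>R. \<exists>N. d = inverse (a ^ N) * p" for d
  proof -
    obtain m where "d \<in> spanL R y m" using gen[OF ny yR] by blast
    then have "d \<in> spanR R y m" using spanL_toR ny by blast
    then obtain p where "p \<in> R" "d = inverse a ^ m * p" using form2[of d R a m] a y_def by auto
    then show ?thesis by (metis power_inverse)
  qed
  have nd: "\<not> sub_division_ring R" using yR a y_def unfolding sub_division_ring_def by auto
  have ex: "\<exists>a\<in>R. a \<noteq> 0 \<and> a \<notin> units_of_sub R \<and> (\<lambda>r. a * r) ` R = (\<lambda>r. r * a) ` R"
    using a nrm_iff[of a] unfolding normalizer_set_def by auto
  have ore: "Ore_with_quotient_ring R"
    unfolding Ore_with_quotient_ring_def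
  proof (intro conjI allI)
    fix d
    obtain p N where "p \<in> R" "d = p * inverse (a ^ N)" using f1 by blast
    moreover have "a ^ N \<in> R" "a ^ N \<noteq> 0" using a by (auto intro: Rpow)
    ultimately show "\<exists>p\<in>R. \<exists>b\<in>R. b \<noteq> 0 \<and> d = p * inverse b" by blast
  next
    fix d
    obtain p N where "p \<in> R" "d = inverse (a ^ N) * p" using f2 by blast
    moreover have "a ^ N \<in> R" "a ^ N \<noteq> 0" using a by (auto intro: Rpow)
    ultimately show "\<exists>p\<in>R. \<exists>b\<in>R. b \<noteq> 0 \<and> d = inverse b * p" by blast
  qed
  have gd: "G_domain R"
    unfolding G_domain_def
  proof (rule bexI[of _ a], intro conjI allI impI)
    fix P assume h: "sub_prime_ideal R P \<and> P \<noteq> {0}"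
    then have P: "sub_prime_ideal R P" by blast
    have "0 \<in> P" "P \<subseteq> R" using P unfolding sub_prime_ideal_def sub_ideal_def by auto
    then obtain p where p: "p \<in> P" "p \<noteq> 0" using h by blast
    obtain q N where q: "q \<in> R" "inverse p = q * inverse (a ^ N)" using f1 by blast
    have "p * q * inverse (a ^ N) = 1" using p q by (metis mult.assoc right_inverse)
    then have "p * q * inverse (a ^ N) * a ^ N = a ^ N" by simp
    then have "p * q = a ^ N" using a by (simp add: mult.assoc)
    moreover have "p * q \<in> P" using P p q unfolding sub_prime_ideal_def sub_ideal_def by auto
    ultimately have "a ^ N \<in> P" by simp
    then show "a \<in> P" using powP[OF P a(1) a(4)] by blast
  qed (use a in auto)
  show ?thesis using nd ex ore gd by blast
qed

end



context msr begin

lemma monic_aux: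
  assumes "s \<in> spanL A' (inverse x) N" "A' \<subseteq> R" "x \<noteq> 0"
  shows "s * x ^ N \<in> spanL R x (Suc N)"
  using assms
proof (induction rule: spanL.induct)
  case L0 then show ?case by (simp add: spanL.L0)
next
  case (Lg d j)
  have "inverse x ^ j * x ^ N = x ^ (N - j)" using Lg by (intro pw3) auto
  then have "d * inverse x ^ j * x ^ N = d * x ^ (N - j)" by (simp add: mult.assoc)
  moreover have "d \<in> R" using Lg by blast
  ultimately show ?case by (metis spanL.Lg less_Suc_eq_le diff_le_self)
next
  case (La s t) then show ?case by (simp add: distrib_right spanL.La)
qed

lemma case2:
  assumes nx: "nrm x" and xR: "x \<notin> R" and yR: "inverse x \<notin> R"
  shows "sub_division_ring R \<and>
        (\<exists>B C. finite B \<and> finite C \<and> left_basis R B \<and> right_basis R C \<and> card B = card C)"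
proof -
  have x0: "x \<noteq> 0" using xR R0 by auto
  have ny: "nrm (inverse x)" using nrm_inv[OF nx] .
  obtain N0 where N0: "x \<in> spanL R (inverse x) N0" using gen[OF ny yR] by blast
  have "x * x ^ N0 \<in> spanL R x (Suc N0)" using monic_aux[OF N0 _ x0] by blast
  then have ex: "\<exists>N. x ^ N \<in> spanL R x N" by (metis power_Suc)
  define n where "n = (LEAST N. x ^ N \<in> spanL R x N)"
  have hn: "x ^ n \<in> spanL R x n" unfolding n_def using LeastI_ex[OF ex] .
  have least: "n \<le> N" if "x ^ N \<in> spanL R x N" for N unfolding n_def using that by (rule Least_le)
  have n1: "0 < n"
  proof (rule ccontr)
    assume "\<not> 0 < n" then have "n = 0" by simp
    then show False using hn spanL_0 by fastforce
  qed
  have Sx: "s * x \<in> spanL R x n" if "s \<in> spanL R x n" for s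
  proof -
    have "s * x \<in> spanL R x (Suc n)" using spanL_zmult[OF that] .
    then obtain t d where td: "t \<in> spanL R x n" "d \<in> R" "s * x = t + d * x ^ n"
      using spanL_top[OF _ R0] Radd by blast
    have "d * x ^ n \<in> spanL R x n" using spanL_lmult[OF hn] td(2) Rmul by blast
    then show ?thesis using td by (simp add: spanL.La)
  qed
  have powS: "x ^ j \<in> spanL R x n" for j
  proof (induction j)
    case 0 then show ?case using spanL.Lg[of 1 R 0 n x] R1 n1 by simp
  next
    case (Suc j)
    have "x ^ j * x \<in> spanL R x n" using Sx Suc.IH by blast
    then show ?case by (simp only: power_Suc2)
  qed
  have inS: "s \<in> spanL R x n" if "s \<in> spanL R x m" for s m
    using that
  proof (induction rule: spanL.induct)
    case L0 then show ?case by (rule spanL.L0)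
  next
    case (Lg d j) then show ?case using spanL_lmult[OF powS] Rmul by blast
  next
    case (La s t) then show ?case by (simp add: spanL.La)
  qed
  have allS: "d \<in> spanL R x n" for d using gen[OF nx xR] inS by blast
  have expl: "\<exists>e. (\<forall>j. e j \<in> R) \<and> d = (\<Sum>j<n. e j * x ^ j)" for d
    using spanL_explicit[OF allS R0] Radd by blast
  have indep: "c j = 0" if c: "\<forall>j. c j \<in> R" "(\<Sum>j<n. c j * x ^ j) = 0" and j: "j < n" for c j
  proof (rule ccontr)
    assume cj: "c j \<noteq> 0"
    define D' where "D' = {j. j < n \<and> c j \<noteq> 0}"
    have fD: "finite D'" unfolding D'_def by simp
    have jD: "j \<in> D'" using cj j unfolding D'_def by simp
    define d where "d = Max D'"
    have dD: "d \<in> D'" unfolding d_def using fD jD by (metis Max_in empty_iff)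
    then have dn: "d < n" and cd: "c d \<noteq> 0" unfolding D'_def by auto
    have above: "c i = 0" if "d < i" "i < n" for i
    proof (rule ccontr)
      assume "c i \<noteq> 0"
      then have "i \<in> D'" using that unfolding D'_def by simp
      then have "i \<le> d" unfolding d_def using fD by simp
      then show False using that by simp
    qed
    have "(\<Sum>j<n. c j * x ^ j) = (\<Sum>j<Suc d. c j * x ^ j)"
      by (rule sum.mono_neutral_right) (use dn above in auto)
    also have "\<dots> = c d * x ^ d + (\<Sum>j<d. c j * x ^ j)" by simp
    finally have rel: "c d * x ^ d + (\<Sum>j<d. c j * x ^ j) = 0" using c by simp
    have tS: "(\<Sum>j<d. c j * x ^ j) \<in> spanL R x d" using spanL_sum c by blast
    define L where "L = {e \<in> R. \<exists>t\<in>spanL R x d. e * x ^ d + t = 0}"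
    have cdL: "c d \<in> L" unfolding L_def using rel tS c by blast
    have LR: "L \<subseteq> R" unfolding L_def by blast
    have L0': "0 \<in> L" unfolding L_def using R0 spanL.L0[of R x d] by force
    have Ladd: "\<forall>a\<in>L. \<forall>b\<in>L. a + b \<in> L"
    proof (intro ballI)
      fix a b assume "a \<in> L" "b \<in> L"
      then obtain t1 t2 where "a \<in> R" "t1 \<in> spanL R x d" "a * x ^ d + t1 = 0"
        "b \<in> R" "t2 \<in> spanL R x d" "b * x ^ d + t2 = 0" unfolding L_def by blast
      moreover have "(a + b) * x ^ d + (t1 + t2) = (a * x ^ d + t1) + (b * x ^ d + t2)"
        by (simp add: algebra_simps)
      ultimately show "a + b \<in> L" unfolding L_def using Radd spanL.La by fastforce
    qed
    have Llm: "\<forall>r\<in>R. \<forall>a\<in>L. r * a \<in> L"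
    proof (intro ballI)
      fix r a assume r: "r \<in> R" and "a \<in> L"
      then obtain t where t: "a \<in> R" "t \<in> spanL R x d" "a * x ^ d + t = 0" unfolding L_def by blast
      have "(r * a) * x ^ d + r * t = r * (a * x ^ d + t)" by (simp add: algebra_simps)
      also have "\<dots> = 0" using t by simp
      finally have "(r * a) * x ^ d + r * t = 0" .
      moreover have "r * t \<in> spanL R x d" using spanL_lmult[OF t(2)] r Rmul by blast
      ultimately show "r * a \<in> L" unfolding L_def using Rmul r t by blast
    qed
    have Lrm: "\<forall>a\<in>L. \<forall>r\<in>R. a * r \<in> L"
    proof (intro ballI)
      fix r a assume r: "r \<in> R" and "a \<in> L"
      then obtain t where t: "a \<in> R" "t \<in> spanL R x d" "a * x ^ d + t = 0" unfolding L_def by blast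
      obtain r0 where r0: "r0 \<in> R" "r * x ^ d = x ^ d * r0" using nrmD2[OF nx r] by blast
      have "(a * r) * x ^ d + t * r0 = (a * x ^ d + t) * r0" by (simp add: algebra_simps r0(2))
      also have "\<dots> = 0" using t by simp
      finally have "(a * r) * x ^ d + t * r0 = 0" .
      moreover have "t * r0 \<in> spanL R x d" using spanL_rmultR[OF t(2) nx r0(1)] Rmul by blast
      ultimately show "a * r \<in> L" unfolding L_def using Rmul r t by blast
    qed
    have "1 \<in> L" using simple[OF nx xR yR LR L0' Ladd Llm Lrm cdL cd] .
    then obtain t where t: "t \<in> spanL R x d" "x ^ d + t = 0" unfolding L_def by auto
    then have "x ^ d = - t" by (simp add: eq_neg_iff_add_eq_0)
    moreover have "- t \<in> spanL R x d" using spanL_neg[OF t(1)] Rneg by blast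
    ultimately have "n \<le> d" using least by simp
    then show False using dn by simp
  qed
  have divR: "sub_division_ring R"
    unfolding sub_division_ring_def
  proof (intro conjI ballI impI)
    show "subring R" by (rule subR)
    fix r assume r: "r \<in> R" "r \<noteq> 0"
    obtain e where e: "\<forall>j. e j \<in> R" "inverse r = (\<Sum>j<n. e j * x ^ j)" using expl by blast
    define c where "c j = r * e j - (if j = 0 then 1 else 0)" for j
    have cR: "\<forall>j. c j \<in> R" unfolding c_def using e r by (auto intro: Rdiff Rmul R1 R0)
    have s1: "(\<Sum>j<n. (r * e j) * x ^ j) = 1"
    proof -
      have "(\<Sum>j<n. (r * e j) * x ^ j) = r * (\<Sum>j<n. e j * x ^ j)"
        by (simp add: sum_distrib_left mult.assoc)
      also have "\<dots> = 1" using e r by (metis right_inverse)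
      finally show ?thesis .
    qed
    have s2: "(\<Sum>j<n. (if j = 0 then 1 else 0) * x ^ j) = 1"
    proof -
      have "(\<Sum>j<n. (if j = 0 then 1 else 0) * x ^ j) = (\<Sum>j<n. if j = 0 then 1 else 0)"
        by (rule sum.cong) auto
      also have "\<dots> = 1" using n1 by simp
      finally show ?thesis .
    qed
    have "(\<Sum>j<n. c j * x ^ j) = 0"
      unfolding c_def by (simp add: left_diff_distrib sum_subtractf s1 s2 del: mult_1 mult_1_left)
    then have "c 0 = 0" using indep[OF cR] n1 by blast
    then have "r * e 0 = 1" unfolding c_def by simp
    then have "inverse r = e 0" by (rule inverse_unique)
    then show "inverse r \<in> R" using e by simp
  qed
  have inj: "inj_on (\<lambda>j. x ^ j) {..<n}"
  proof (rule inj_onI)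
    have key: "False" if "i < j" "j < n" "x ^ i = x ^ j" for i j
    proof -
      have "x ^ j = x ^ i * x ^ (j - i)" using that(1) by (simp add: power_add[symmetric])
      then have "x ^ i * x ^ (j - i) = x ^ i * 1" using that(3) by simp
      then have "x ^ (j - i) = 1" using x0 by (metis mult_cancel_left power_eq_0_iff)
      moreover have "1 \<in> spanL R x (j - i)" using spanL.Lg[of 1 R 0 "j - i" x] R1 that by simp
      ultimately have "n \<le> j - i" using least by simp
      then show False using that by simp
    qed
    fix i j assume "i \<in> {..<n}" "j \<in> {..<n}" "x ^ i = x ^ j"
    then show "i = j" using key[of i j] key[of j i] by (metis lessThan_iff linorder_neqE_nat)
  qed
  define B where "B = (\<lambda>j. x ^ j) ` {..<n}"
  have finB: "finite B" unfolding B_def by simp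
  have xj0: "x ^ j \<noteq> 0" for j using x0 by simp
  have reidx: "\<exists>J. J \<subseteq> {..<n} \<and> F = (\<lambda>j. x ^ j) ` J" if "F \<subseteq> B" for F
  proof -
    have "F = (\<lambda>j. x ^ j) ` {j \<in> {..<n}. x ^ j \<in> F}"
    proof (intro equalityI subsetI)
      fix b assume bF: "b \<in> F"
      then have "b \<in> B" using that by blast
      then obtain j where j: "j \<in> {..<n}" "b = x ^ j" unfolding B_def by blast
      then have "j \<in> {j \<in> {..<n}. x ^ j \<in> F}" using bF by simp
      then show "b \<in> (\<lambda>j. x ^ j) ` {j \<in> {..<n}. x ^ j \<in> F}" using j(2) by (rule rev_image_eqI)
    next
      fix b assume "b \<in> (\<lambda>j. x ^ j) ` {j \<in> {..<n}. x ^ j \<in> F}"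
      then show "b \<in> F" by blast
    qed
    moreover have "{j \<in> {..<n}. x ^ j \<in> F} \<subseteq> {..<n}" by blast
    ultimately show ?thesis by (intro exI[of _ "{j \<in> {..<n}. x ^ j \<in> F}"] conjI)
  qed
  have lb: "left_basis R B"
    unfolding left_basis_def
  proof (intro conjI allI impI ballI)
    fix F c b
    assume h: "finite F \<and> F \<subseteq> B \<and> (\<forall>b\<in>F. c b \<in> R) \<and> (\<Sum>b\<in>F. c b * b) = 0" and bF: "b \<in> F"
    have FB: "F \<subseteq> B" using h by blast
    obtain J where J: "J \<subseteq> {..<n}" "F = (\<lambda>j. x ^ j) ` J" using reidx[OF FB] by blast
    have injJ: "inj_on (\<lambda>j. x ^ j) J" using inj J(1) by (rule inj_on_subset)
    define c' where "c' j = (if j \<in> J then c (x ^ j) else 0)" for j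
    have c'R: "\<forall>j. c' j \<in> R" unfolding c'_def using h J R0 by auto
    have "(\<Sum>j<n. c' j * x ^ j) = (\<Sum>j<n. if j \<in> J then c (x ^ j) * x ^ j else 0)"
      unfolding c'_def by (rule sum.cong) auto
    also have "\<dots> = (\<Sum>j\<in>{..<n} \<inter> J. c (x ^ j) * x ^ j)" by (simp add: sum.inter_restrict)
    also have "{..<n} \<inter> J = J" using J by blast
    also have "(\<Sum>j\<in>J. c (x ^ j) * x ^ j) = (\<Sum>b\<in>F. c b * b)"
      using J(2) sum.reindex[OF injJ, of "\<lambda>b. c b * b"] by simp
    finally have "(\<Sum>j<n. c' j * x ^ j) = 0" using h by simp
    then have z: "\<forall>j<n. c' j = 0" using indep[OF c'R] by blast
    obtain j where "j \<in> J" "b = x ^ j" using bF J by blast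
    then show "c b = 0" using z J unfolding c'_def by auto
  next
    fix d
    obtain e where e: "\<forall>j. e j \<in> R" "d = (\<Sum>j<n. e j * x ^ j)" using expl by blast
    define c where "c b = e (inv_into {..<n} (\<lambda>j. x ^ j) b)" for b
    have "(\<Sum>b\<in>B. c b * b) = (\<Sum>j<n. c (x ^ j) * x ^ j)"
      unfolding B_def using sum.reindex[OF inj, of "\<lambda>b. c b * b"] by simp
    also have "\<dots> = d" unfolding c_def e(2) using inj by (intro sum.cong) auto
    finally have eq: "(\<Sum>b\<in>B. c b * b) = d" .
    have cR: "\<forall>b\<in>B. c b \<in> R" unfolding c_def using e(1) by blast
    show "\<exists>F c. finite F \<and> F \<subseteq> B \<and> (\<forall>b\<in>F. c b \<in> R) \<and> d = (\<Sum>b\<in>F. c b * b)"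
      by (intro exI[of _ B] exI[of _ c]) (use finB cR eq in auto)
  qed
  have rb: "right_basis R B"
    unfolding right_basis_def
  proof (intro conjI allI impI ballI)
    fix F c b
    assume h: "finite F \<and> F \<subseteq> B \<and> (\<forall>b\<in>F. c b \<in> R) \<and> (\<Sum>b\<in>F. b * c b) = 0" and bF: "b \<in> F"
    have FB: "F \<subseteq> B" using h by blast
    obtain J where J: "J \<subseteq> {..<n}" "F = (\<lambda>j. x ^ j) ` J" using reidx[OF FB] by blast
    have injJ: "inj_on (\<lambda>j. x ^ j) J" using inj J(1) by (rule inj_on_subset)
    define c' where "c' j = (if j \<in> J then (SOME s. s \<in> R \<and> x ^ j * c (x ^ j) = s * x ^ j) else 0)" for j
    have c'p: "c' j \<in> R \<and> x ^ j * c (x ^ j) = c' j * x ^ j" if "j \<in> J" for j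
    proof -
      have "c (x ^ j) \<in> R" using h J that by blast
      then have "\<exists>s. s \<in> R \<and> x ^ j * c (x ^ j) = s * x ^ j" using nrmD1[OF nx] by blast
      then have "(SOME s. s \<in> R \<and> x ^ j * c (x ^ j) = s * x ^ j) \<in> R \<and>
          x ^ j * c (x ^ j) = (SOME s. s \<in> R \<and> x ^ j * c (x ^ j) = s * x ^ j) * x ^ j"
        by (rule someI_ex)
      then show ?thesis unfolding c'_def using that by simp
    qed
    have c'R: "\<forall>j. c' j \<in> R"
    proof
      fix j show "c' j \<in> R"
      proof (cases "j \<in> J")
        case True then show ?thesis using c'p by blast
      next
        case False then show ?thesis unfolding c'_def using R0 by simp
      qed
    qed
    have "(\<Sum>j<n. c' j * x ^ j) = (\<Sum>j<n. if j \<in> J then x ^ j * c (x ^ j) else 0)"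
      using c'p unfolding c'_def by (intro sum.cong) auto
    also have "\<dots> = (\<Sum>j\<in>{..<n} \<inter> J. x ^ j * c (x ^ j))" by (simp add: sum.inter_restrict)
    also have "{..<n} \<inter> J = J" using J by blast
    also have "(\<Sum>j\<in>J. x ^ j * c (x ^ j)) = (\<Sum>b\<in>F. b * c b)"
      using J(2) sum.reindex[OF injJ, of "\<lambda>b. b * c b"] by simp
    finally have "(\<Sum>j<n. c' j * x ^ j) = 0" using h by simp
    then have z: "\<forall>j<n. c' j = 0" using indep[OF c'R] by blast
    obtain j where jJ: "j \<in> J" "b = x ^ j" using bF J by blast
    then have "x ^ j * c (x ^ j) = 0" using z J c'p by auto
    then show "c b = 0" using jJ x0 by simp
  next
    fix d
    obtain e where e: "\<forall>j. e j \<in> R" "d = (\<Sum>j<n. e j * x ^ j)" using expl by blast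
    define e' where "e' j = (SOME s. s \<in> R \<and> e j * x ^ j = x ^ j * s)" for j
    have e'p: "e' j \<in> R \<and> e j * x ^ j = x ^ j * e' j" for j
    proof -
      have "\<exists>s. s \<in> R \<and> e j * x ^ j = x ^ j * s" using nrmD2[OF nx] e(1) by blast
      then show ?thesis unfolding e'_def by (rule someI_ex)
    qed
    define c where "c b = e' (inv_into {..<n} (\<lambda>j. x ^ j) b)" for b
    have "(\<Sum>b\<in>B. b * c b) = (\<Sum>j<n. x ^ j * c (x ^ j))"
      unfolding B_def using sum.reindex[OF inj, of "\<lambda>b. b * c b"] by simp
    also have "\<dots> = (\<Sum>j<n. x ^ j * e' j)" unfolding c_def using inj by (intro sum.cong) auto
    also have "\<dots> = d" unfolding e(2) using e'p by (intro sum.cong) auto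
    finally have eq: "(\<Sum>b\<in>B. b * c b) = d" .
    have cR: "\<forall>b\<in>B. c b \<in> R" unfolding c_def using e'p by blast
    show "\<exists>F c. finite F \<and> F \<subseteq> B \<and> (\<forall>b\<in>F. c b \<in> R) \<and> d = (\<Sum>b\<in>F. b * c b)"
      by (intro exI[of _ B] exI[of _ c]) (use finB cR eq in auto)
  qed
  show ?thesis using divR finB lb rb by blast
qed

end


theorem theorem2p5:
  fixes R :: "'a::division_ring set"
  assumes noncomm: "\<exists>x y :: 'a. x * y \<noteq> y * x"
    and max: "maximal_subring R"
  shows "normalizer_set R = units_of_sub R \<union> {0}
    \<or> (sub_division_ring R \<and>
        (\<exists>B C. finite B \<and> finite C \<and> left_basis R B \<and> right_basis R C \<and> card B = card C))
    \<or> (\<not> sub_division_ring R \<and>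
        (\<exists>a\<in>R. a \<noteq> 0 \<and> a \<notin> units_of_sub R \<and> (\<lambda>r. a * r) ` R = (\<lambda>r. r * a) ` R) \<and>
        G_domain R \<and> Ore_with_quotient_ring R)"
proof -
  interpret msr R using max by unfold_locales
  have sub: "units_of_sub R \<union> {0} \<subseteq> normalizer_set R"
  proof
    fix u assume u: "u \<in> units_of_sub R \<union> {0}"
    show "u \<in> normalizer_set R"
    proof (cases "u = 0")
      case True
      have "nrm u" unfolding nrm_def using True R0 by auto
      then show ?thesis using nrm_iff by blast
    next
      case False
      then obtain v where uv: "u \<in> R" "v \<in> R" "u * v = 1" "v * u = 1"
        using u unfolding units_of_sub_def by blast
      have "\<exists>s\<in>R. u * r = s * u" if r: "r \<in> R" for r
      proof -
        have "u * r = (u * r * v) * u" by (simp add: mult.assoc uv(4))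
        moreover have "u * r * v \<in> R" using uv r by (auto intro: Rmul)
        ultimately show ?thesis by blast
      qed
      moreover have "\<exists>s\<in>R. r * u = u * s" if r: "r \<in> R" for r
      proof -
        have "r * u = u * (v * r * u)" by (simp add: mult.assoc[symmetric] uv(3))
        moreover have "v * r * u \<in> R" using uv r by (auto intro: Rmul)
        ultimately show ?thesis by blast
      qed
      ultimately have "nrm u" unfolding nrm_def by blast
      then show ?thesis using nrm_iff by blast
    qed
  qed
  show ?thesis
  proof (cases "normalizer_set R = units_of_sub R \<union> {0}")
    case True then show ?thesis by blast
  next
    case False
    then obtain x where xN: "x \<in> normalizer_set R" and xU: "x \<notin> units_of_sub R" and x0: "x \<noteq> 0"
      using sub by blast
    have nx: "nrm x" using xN nrm_iff by blast
    show ?thesis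
    proof (cases "x \<in> R")
      case True
      then show ?thesis using case3[OF True x0 xU nx] by blast
    next
      case xR: False
      show ?thesis
      proof (cases "inverse x \<in> R")
        case True
        have a0: "inverse x \<noteq> 0" using x0 by simp
        have aU: "inverse x \<notin> units_of_sub R"
        proof
          assume "inverse x \<in> units_of_sub R"
          then obtain y where "y \<in> R" "inverse x * y = 1" unfolding units_of_sub_def by blast
          then have "inverse (inverse x) = y" by (intro inverse_unique)
          then show False using xR \<open>y \<in> R\<close> by simp
        qed
        show ?thesis using case3[OF True a0 aU nrm_inv[OF nx]] by blast
      next
        case False
        then show ?thesis using case2[OF nx xR False] by blast
      qed
    qed
  qed
qed

end
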